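(* Let $R$ be an ideal QRF with a faithful, possibly projective, unitary representation $U_R(G)=\mathcal{G}_R$ of $G=\mathbb{Z}_2^{\times(n-k)}$ on $\mathcal{H}_R\simeq(\mathbb{C}^2)^{\otimes(n-k)}$ such that $-I_R\notin\mathcal{G}_R$. For each covariant orthonormal orientation basis $\{\ket g_R\}_{g\in G}$ of $\mathcal{H}_R$, the map $\hat U_R:\hat G\to\mathrm{Aut}(\mathcal{H}_R)$, $\hat U^\chi_R=\sum_{g\in G}\chi(g)\ket g\!\bra g_R$, is a unitary representation of $\hat G$ that is dual to $\mathcal{G}_R$: $U^g_R\hat U^\chi_R=\chi(g)\hat U^\chi_RU^g_R$ for all $g\in G$, $\chi\in\hat G$. Conversely, each unitary representation $\hat U_R$ of $\hat G$ on $\mathcal{H}_R$ dual to $\mathcal{G}_R$ gives rise to a covariant orthonormal orientation basis of $\mathcal{H}_R$. Furthermore, the elements of any such $\hat{\mathcal{G}}_R=\hat U_R(\hat G)$ square to the identity and satisfy $\mathrm{Tr}(\hat U^\chi_R\hat U^\eta_R)=2^{n-k}\delta_{\chi,\eta}$ for all $\chi,\eta\in\hat G$.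
   Context: $G=\mathbb{Z}_2^{\times(n-k)}$ (neutral element $e$) and $\hat G$ is its group of characters $\chi:G\to\{\pm1\}$ (pointwise product). A possibly projective unitary representation satisfies $U^g_RU^h_R=c(g,h)U^{gh}_R$ with phases $|c(g,h)|=1$, $U^e_R=I_R$, $c(g,e)=c(e,g)=1$, the cocycle condition $c(g,hk)c(h,k)=c(g,h)c(gh,k)$, and (by a choice of phases assumed throughout) $c(g,g^{-1})=1$ for all $g$. A covariant orthonormal orientation basis is an orthonormal basis $\{\ket g_R\}_{g\in G}$ of $\mathcal{H}_R$ with $U^g_R\ket h_R=c(g,h)\ket{gh}_R$ for all $g,h$; a QRF admitting one is called ideal. A unitary representation $\hat U_R$ of $\hat G$ on $\mathcal{H}_R$ is dual to $\mathcal{G}_R$ if $U^g_R\hat U^\chi_R=\chi(g)\hat U^\chi_RU^g_R$ for all $g,\chi$. *)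

theory Defs
  imports "Jordan_Normal_Form.Matrix"
begin

text \<open>The group G = Z_2^m (m = n - k), elements are boolean lists of length m,
  group law = componentwise xor, neutral element = all False.
  Every element is its own inverse.\<close>

definition grp :: "nat \<Rightarrow> bool list set" where
  "grp m = {xs. length xs = m}"

definition gmult :: "bool list \<Rightarrow> bool list \<Rightarrow> bool list" where
  "gmult xs ys = map2 (\<lambda>a b. a \<noteq> b) xs ys"

definition gunit :: "nat \<Rightarrow> bool list" where
  "gunit m = replicate m False"

definition chars :: "nat \<Rightarrow> (bool list \<Rightarrow> complex) set" where
  "chars m = {\<chi>. (\<forall>g\<in>grp m. \<chi> g = 1 \<or> \<chi> g = -1)
               \<and> (\<forall>g\<in>grp m. \<forall>h\<in>grp m. \<chi> (gmult g h) = \<chi> g * \<chi> h)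
               \<and> (\<forall>g. g \<notin> grp m \<longrightarrow> \<chi> g = 0)}"

definition cmult :: "(bool list \<Rightarrow> complex) \<Rightarrow> (bool list \<Rightarrow> complex) \<Rightarrow> bool list \<Rightarrow> complex" where
  "cmult \<chi> \<eta> = (\<lambda>g. \<chi> g * \<eta> g)"

definition cunit :: "nat \<Rightarrow> bool list \<Rightarrow> complex" where
  "cunit m = (\<lambda>g. if g \<in> grp m then 1 else 0)"

definition adj :: "complex mat \<Rightarrow> complex mat" where
  "adj A = mat (dim_col A) (dim_row A) (\<lambda>(i,j). cnj (A $$ (j,i)))"

definition unitary_op :: "nat \<Rightarrow> complex mat \<Rightarrow> bool" where
  "unitary_op d A \<longleftrightarrow> A \<in> carrier_mat d d \<and> adj A * A = 1\<^sub>m d \<and> A * adj A = 1\<^sub>m d"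

definition tr :: "complex mat \<Rightarrow> complex" where
  "tr A = (\<Sum>i<dim_row A. A $$ (i,i))"

definition ip :: "complex vec \<Rightarrow> complex vec \<Rightarrow> complex" where
  "ip v w = (\<Sum>i<dim_vec v. cnj (v $ i) * w $ i)"

definition proj_rep :: "nat \<Rightarrow> (bool list \<Rightarrow> complex mat) \<Rightarrow> (bool list \<Rightarrow> bool list \<Rightarrow> complex) \<Rightarrow> bool" where
  "proj_rep m U c \<longleftrightarrow>
     (\<forall>g\<in>grp m. unitary_op (2^m) (U g))
   \<and> (\<forall>g\<in>grp m. \<forall>h\<in>grp m. U g * U h = c g h \<cdot>\<^sub>m U (gmult g h))
   \<and> U (gunit m) = 1\<^sub>m (2^m)
   \<and> (\<forall>g\<in>grp m. \<forall>h\<in>grp m. cmod (c g h) = 1)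
   \<and> (\<forall>g\<in>grp m. c g (gunit m) = 1 \<and> c (gunit m) g = 1)
   \<and> (\<forall>g\<in>grp m. \<forall>h\<in>grp m. \<forall>k\<in>grp m. c g (gmult h k) * c h k = c g h * c (gmult g h) k)
   \<and> (\<forall>g\<in>grp m. c g g = 1)"

definition orth_basis :: "nat \<Rightarrow> (bool list \<Rightarrow> complex vec) \<Rightarrow> bool" where
  "orth_basis m ket \<longleftrightarrow>
     (\<forall>g\<in>grp m. ket g \<in> carrier_vec (2^m))
   \<and> (\<forall>g\<in>grp m. \<forall>h\<in>grp m. ip (ket g) (ket h) = (if g = h then 1 else 0))
   \<and> (\<forall>v\<in>carrier_vec (2^m). \<exists>a. v = vec (2^m) (\<lambda>i. \<Sum>g\<in>grp m. a g * ket g $ i))"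

definition covariant_basis ::
  "nat \<Rightarrow> (bool list \<Rightarrow> complex mat) \<Rightarrow> (bool list \<Rightarrow> bool list \<Rightarrow> complex) \<Rightarrow> (bool list \<Rightarrow> complex vec) \<Rightarrow> bool" where
  "covariant_basis m U c ket \<longleftrightarrow> orth_basis m ket
     \<and> (\<forall>g\<in>grp m. \<forall>h\<in>grp m. U g *\<^sub>v ket h = c g h \<cdot>\<^sub>v ket (gmult g h))"

definition diag_op :: "nat \<Rightarrow> (bool list \<Rightarrow> complex vec) \<Rightarrow> (bool list \<Rightarrow> complex) \<Rightarrow> complex mat" where
  "diag_op m ket \<chi> = mat (2^m) (2^m) (\<lambda>(i,j). \<Sum>g\<in>grp m. \<chi> g * (ket g $ i) * cnj (ket g $ j))"

definition dual_group_rep :: "nat \<Rightarrow> ((bool list \<Rightarrow> complex) \<Rightarrow> complex mat) \<Rightarrow> bool" where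
  "dual_group_rep m V \<longleftrightarrow>
     (\<forall>\<chi>\<in>chars m. unitary_op (2^m) (V \<chi>))
   \<and> (\<forall>\<chi>\<in>chars m. \<forall>\<eta>\<in>chars m. V (cmult \<chi> \<eta>) = V \<chi> * V \<eta>)
   \<and> V (cunit m) = 1\<^sub>m (2^m)"

definition is_dual :: "nat \<Rightarrow> (bool list \<Rightarrow> complex mat) \<Rightarrow> ((bool list \<Rightarrow> complex) \<Rightarrow> complex mat) \<Rightarrow> bool" where
  "is_dual m U V \<longleftrightarrow>
     (\<forall>g\<in>grp m. \<forall>\<chi>\<in>chars m. U g * V \<chi> = \<chi> g \<cdot>\<^sub>m (V \<chi> * U g))"

end

theory Submission
  imports Defs
begin


lemma grp_finite: "finite (grp m)"
  unfolding grp_def using finite_lists_length_eq[of "UNIV::bool set" m] by simp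

lemma grp_card: "card (grp m) = 2^m"
  unfolding grp_def using card_lists_length_eq[of "UNIV::bool set" m] by simp

lemma gmult_grp: "g \<in> grp m \<Longrightarrow> h \<in> grp m \<Longrightarrow> gmult g h \<in> grp m"
  unfolding grp_def gmult_def by simp

lemma gunit_grp: "gunit m \<in> grp m"
  unfolding grp_def gunit_def by simp

lemma chars_vals: "\<chi> \<in> chars m \<Longrightarrow> g \<in> grp m \<Longrightarrow> \<chi> g = 1 \<or> \<chi> g = -1"
  unfolding chars_def by blast

lemma chars_sq: "\<chi> \<in> chars m \<Longrightarrow> g \<in> grp m \<Longrightarrow> \<chi> g * \<chi> g = 1"
  by (drule chars_vals, assumption, elim disjE) simp_all

lemma chars_cnj: "\<chi> \<in> chars m \<Longrightarrow> g \<in> grp m \<Longrightarrow> cnj (\<chi> g) = \<chi> g"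
  by (drule chars_vals, assumption, elim disjE) simp_all

lemma chars_mult: "\<chi> \<in> chars m \<Longrightarrow> g \<in> grp m \<Longrightarrow> h \<in> grp m \<Longrightarrow> \<chi> (gmult g h) = \<chi> g * \<chi> h"
  unfolding chars_def by blast

lemma chars_out: "\<chi> \<in> chars m \<Longrightarrow> g \<notin> grp m \<Longrightarrow> \<chi> g = 0"
  unfolding chars_def by blast

lemma cunit_chars: "cunit m \<in> chars m"
  unfolding chars_def cunit_def by (auto simp: gmult_grp)

lemma cmult_chars: "\<chi> \<in> chars m \<Longrightarrow> \<eta> \<in> chars m \<Longrightarrow> cmult \<chi> \<eta> \<in> chars m"
  unfolding cmult_def chars_def
  apply (intro CollectI conjI ballI allI impI)
  subgoal for g by (drule chars_vals[of \<chi>, unfolded chars_def], assumption,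
     drule chars_vals[of \<eta>, unfolded chars_def], assumption, elim disjE; simp)
  subgoal by (simp add: mult_ac)
  subgoal by simp
  done

lemma cmult_self: "\<chi> \<in> chars m \<Longrightarrow> cmult \<chi> \<chi> = cunit m"
proof
  fix g assume c: "\<chi> \<in> chars m"
  show "cmult \<chi> \<chi> g = cunit m g"
    using chars_sq[OF c, of g] chars_out[OF c, of g] unfolding cmult_def cunit_def
    by (cases "g \<in> grp m") simp_all
qed

lemma cmult_cancel: "\<chi> \<in> chars m \<Longrightarrow> \<psi> \<in> chars m \<Longrightarrow> cmult \<chi> (cmult \<chi> \<psi>) = \<psi>"
proof
  fix g assume c: "\<chi> \<in> chars m" "\<psi> \<in> chars m"
  show "cmult \<chi> (cmult \<chi> \<psi>) g = \<psi> g"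
    using chars_sq[OF c(1)] chars_out[OF c(2)] unfolding cmult_def
    by (cases "g \<in> grp m") (auto simp: mult.assoc[symmetric])
qed

lemma cmult_eq_cunit: "\<chi> \<in> chars m \<Longrightarrow> \<eta> \<in> chars m \<Longrightarrow> cmult \<chi> \<eta> = cunit m \<longleftrightarrow> \<chi> = \<eta>"
proof
  assume c: "\<chi> \<in> chars m" "\<eta> \<in> chars m" and e: "cmult \<chi> \<eta> = cunit m"
  show "\<chi> = \<eta>"
  proof
    fix g show "\<chi> g = \<eta> g"
    proof (cases "g \<in> grp m")
      case True
      then have "\<chi> g * \<eta> g = 1" using e unfolding cmult_def cunit_def by meson
      then show ?thesis using chars_vals[OF c(1) True] chars_vals[OF c(2) True] by auto
    next
      case False then show ?thesis using chars_out c by metis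
    qed
  qed
qed (simp add: cmult_self)

lemma chars_finite: "finite (chars m)"
proof -
  have "chars m \<subseteq> {f. \<forall>x. (x \<in> grp m \<longrightarrow> f x \<in> {1,-1}) \<and> (x \<notin> grp m \<longrightarrow> f x = 0)}"
    unfolding chars_def by auto
  moreover have "finite {f. \<forall>x. (x \<in> grp m \<longrightarrow> f x \<in> {1,-1::complex}) \<and> (x \<notin> grp m \<longrightarrow> f x = 0)}"
    by (rule finite_set_of_finite_funs) (auto simp: grp_finite)
  ultimately show ?thesis by (rule finite_subset)
qed

lemma cmult_bij: "\<chi> \<in> chars m \<Longrightarrow> bij_betw (cmult \<chi>) (chars m) (chars m)"
  by (rule bij_betwI[where g="cmult \<chi>"]) (auto simp: cmult_chars cmult_cancel)

lemma sep_char: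
  assumes g: "g \<in> grp m" and h: "h \<in> grp m" and ne: "g \<noteq> h"
  shows "\<exists>\<chi>\<in>chars m. \<chi> g * \<chi> h = -1"
proof -
  have lg: "length g = m" and lh: "length h = m" using g h unfolding grp_def by auto
  have "\<exists>i<m. g ! i \<noteq> h ! i"
  proof (rule ccontr)
    assume "\<not> (\<exists>i<m. g ! i \<noteq> h ! i)"
    then have "g = h" using lg lh by (intro nth_equalityI) auto
    then show False using ne by simp
  qed
  then obtain i where i: "i < m" "g ! i \<noteq> h ! i" by blast
  define \<chi> where "\<chi> = (\<lambda>x. if x \<in> grp m then (if x ! i then -1 else 1) else (0::complex))"
  have "\<chi> \<in> chars m"
    unfolding chars_def
  proof (intro CollectI conjI ballI allI impI)
    fix x y assume x: "x \<in> grp m" and y: "y \<in> grp m"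
    have "gmult x y ! i = (x ! i \<noteq> y ! i)" using x y i unfolding grp_def gmult_def by simp
    moreover have "gmult x y \<in> grp m" using x y by (rule gmult_grp)
    ultimately show "\<chi> (gmult x y) = \<chi> x * \<chi> y" unfolding \<chi>_def using x y
      by (cases "x ! i"; cases "y ! i") simp_all
  next
    fix x assume "x \<in> grp m" then show "\<chi> x = 1 \<or> \<chi> x = -1" unfolding \<chi>_def by simp
  next
    fix x assume "x \<notin> grp m" then show "\<chi> x = 0" unfolding \<chi>_def by simp
  qed
  moreover have "\<chi> g * \<chi> h = -1" using i g h unfolding \<chi>_def
    by (cases "g ! i"; cases "h ! i") simp_all
  ultimately show ?thesis by blast
qed



lemma onb_complete:
  fixes ket :: "bool list \<Rightarrow> complex vec"
  assumes fin: "finite I" and cardI: "card I = n"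
    and car: "\<And>g. g \<in> I \<Longrightarrow> ket g \<in> carrier_vec n"
    and orth: "\<And>g h. g \<in> I \<Longrightarrow> h \<in> I \<Longrightarrow> ip (ket g) (ket h) = (if g = h then 1 else 0)"
    and ij: "i < n" "j < n"
  shows "(\<Sum>g\<in>I. ket g $ i * cnj (ket g $ j)) = (if i = j then 1 else 0)"
proof -
  define q where "q = (\<lambda>i j. \<Sum>g\<in>I. ket g $ i * cnj (ket g $ j))"
  define d where "d = (\<lambda>i j. (if i = j then 1 else 0) - q i j)"
  have ipk: "ip (ket g) (ket h) = (\<Sum>k<n. cnj (ket g $ k) * ket h $ k)" if "g \<in> I" for g h
    using car[OF that] unfolding ip_def by simp
  have qq: "(\<Sum>k<n. q i k * q k j) = q i j" for i j
  proof -
    have "(\<Sum>k<n. q i k * q k j) = (\<Sum>k<n. \<Sum>g\<in>I. \<Sum>h\<in>I. ket g $ i * (cnj (ket g $ k) * ket h $ k) * cnj (ket h $ j))"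
      unfolding q_def by (simp add: sum_distrib_left sum_distrib_right mult_ac)
    also have "\<dots> = (\<Sum>g\<in>I. \<Sum>k<n. \<Sum>h\<in>I. ket g $ i * (cnj (ket g $ k) * ket h $ k) * cnj (ket h $ j))"
      by (rule sum.swap)
    also have "\<dots> = (\<Sum>g\<in>I. \<Sum>h\<in>I. \<Sum>k<n. ket g $ i * (cnj (ket g $ k) * ket h $ k) * cnj (ket h $ j))"
      by (rule sum.cong[OF refl], rule sum.swap)
    also have "\<dots> = (\<Sum>g\<in>I. \<Sum>h\<in>I. ket g $ i * (\<Sum>k<n. cnj (ket g $ k) * ket h $ k) * cnj (ket h $ j))"
      by (simp only: sum_distrib_left sum_distrib_right)
    also have "\<dots> = (\<Sum>g\<in>I. \<Sum>h\<in>I. (if g = h then ket g $ i * cnj (ket h $ j) else 0))"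
      by (intro sum.cong refl) (simp add: orth ipk[symmetric])
    also have "\<dots> = q i j" unfolding q_def using fin
      by (intro sum.cong refl) (simp add: sum.delta)
    finally show ?thesis .
  qed
  have qc: "cnj (q i j) = q j i" for i j unfolding q_def by (simp add: mult.commute)
  have qt: "(\<Sum>i<n. q i i) = of_nat n"
  proof -
    have "(\<Sum>i<n. q i i) = (\<Sum>i<n. \<Sum>g\<in>I. cnj (ket g $ i) * ket g $ i)"
      unfolding q_def by (simp add: mult.commute)
    also have "\<dots> = (\<Sum>g\<in>I. \<Sum>i<n. cnj (ket g $ i) * ket g $ i)" by (rule sum.swap)
    also have "\<dots> = (\<Sum>g\<in>I. 1)" by (intro sum.cong refl) (simp add: orth ipk[symmetric])
    finally show ?thesis using cardI by simp
  qed
  have dd: "(\<Sum>k<n. d i k * d k j) = d i j" if "i < n" "j < n" for i j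
  proof -
    have e: "d i k * d k j = (if i = k then (if k = j then 1 else 0) else 0)
        - (if i = k then q k j else 0) - (if k = j then q i k else 0) + q i k * q k j" for k
      unfolding d_def by (simp add: algebra_simps)
    have "(\<Sum>k<n. d i k * d k j) = (\<Sum>k<n. (if i = k then (if k = j then 1 else 0) else 0))
        - (\<Sum>k<n. (if i = k then q k j else 0)) - (\<Sum>k<n. (if k = j then q i k else 0))
        + (\<Sum>k<n. q i k * q k j)"
      unfolding e by (simp only: sum.distrib sum_subtractf)
    also have "(\<Sum>k<n. (if i = k then (if k = j then 1 else 0) else (0::complex))) = (if i = j then 1 else 0)"
      using that by (simp add: sum.delta)
    also have "(\<Sum>k<n. (if i = k then q k j else 0)) = q i j" using that by (simp add: sum.delta)
    also have "(\<Sum>k<n. (if k = j then q i k else 0)) = q i j" using that by (simp add: sum.delta')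
    finally show ?thesis unfolding d_def qq by simp
  qed
  have dc: "cnj (d i j) = d j i" for i j unfolding d_def using qc by auto
  have dt: "(\<Sum>i<n. d i i) = 0" unfolding d_def using qt by (simp add: sum_subtractf)
  have "(\<Sum>i<n. \<Sum>k<n. d i k * cnj (d i k)) = 0"
  proof -
    have "(\<Sum>i<n. \<Sum>k<n. d i k * cnj (d i k)) = (\<Sum>i<n. \<Sum>k<n. d i k * d k i)"
      by (simp only: dc)
    also have "\<dots> = (\<Sum>i<n. d i i)" by (intro sum.cong refl dd) auto
    finally show ?thesis using dt by simp
  qed
  then have "(\<Sum>i<n. \<Sum>k<n. complex_of_real ((cmod (d i k))\<^sup>2)) = 0"
    by (simp only: complex_norm_square)
  then have "(\<Sum>i<n. \<Sum>k<n. (cmod (d i k))\<^sup>2) = 0"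
    by (simp only: of_real_sum[symmetric] of_real_eq_0_iff)
  then have "\<forall>i\<in>{..<n}. (\<Sum>k<n. (cmod (d i k))\<^sup>2) = 0"
    by (subst (asm) sum_nonneg_eq_0_iff) (simp_all add: sum_nonneg)
  then have "(\<Sum>k<n. (cmod (d i k))\<^sup>2) = 0" using ij by blast
  then have "\<forall>k\<in>{..<n}. (cmod (d i k))\<^sup>2 = 0"
    by (subst (asm) sum_nonneg_eq_0_iff) simp_all
  then have "(cmod (d i j))\<^sup>2 = 0" using ij by blast
  then have "d i j = 0" by simp
  then show ?thesis unfolding d_def q_def by simp
qed



definition onb :: "nat \<Rightarrow> (bool list \<Rightarrow> complex vec) \<Rightarrow> bool" where
  "onb m ket \<longleftrightarrow> (\<forall>g\<in>grp m. ket g \<in> carrier_vec (2^m))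
     \<and> (\<forall>g\<in>grp m. \<forall>h\<in>grp m. ip (ket g) (ket h) = (if g = h then 1 else 0))"

lemma onb_compl:
  assumes "onb m ket" "i < 2^m" "j < 2^m"
  shows "(\<Sum>g\<in>grp m. ket g $ i * cnj (ket g $ j)) = (if i = j then 1 else 0)"
  using assms unfolding onb_def
  by (intro onb_complete[where n="2^m"]) (auto simp: grp_finite grp_card)

lemma ip_adj:
  assumes A: "A \<in> carrier_mat n n" and x: "x \<in> carrier_vec n" and y: "y \<in> carrier_vec n"
  shows "ip x (A *\<^sub>v y) = ip (adj A *\<^sub>v x) y"
proof -
  have "ip x (A *\<^sub>v y) = (\<Sum>i<n. \<Sum>k<n. cnj (x $ i) * A $$ (i,k) * y $ k)"
    using A x y unfolding ip_def
    by (simp add: scalar_prod_def row_def sum_distrib_left mult.assoc atLeast0LessThan)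
  also have "\<dots> = (\<Sum>k<n. \<Sum>i<n. cnj (x $ i) * A $$ (i,k) * y $ k)" by (rule sum.swap)
  also have "\<dots> = ip (adj A *\<^sub>v x) y"
    using A x y unfolding ip_def adj_def
    by (simp add: scalar_prod_def row_def sum_distrib_right sum_distrib_left mult_ac atLeast0LessThan)
  finally show ?thesis .
qed

lemma ip_unitary:
  assumes U: "unitary_op n A" and x: "x \<in> carrier_vec n" and y: "y \<in> carrier_vec n"
  shows "ip (A *\<^sub>v x) (A *\<^sub>v y) = ip x y"
proof -
  have A: "A \<in> carrier_mat n n" and aa: "adj A * A = 1\<^sub>m n" using U unfolding unitary_op_def by auto
  have adjA: "adj A \<in> carrier_mat n n" using A unfolding adj_def by auto
  have "ip (A *\<^sub>v x) (A *\<^sub>v y) = ip (adj A *\<^sub>v (A *\<^sub>v x)) y"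
    using A x y by (intro ip_adj) auto
  also have "adj A *\<^sub>v (A *\<^sub>v x) = (adj A * A) *\<^sub>v x" using A adjA x by simp
  also have "\<dots> = x" using aa x by simp
  finally show ?thesis .
qed

lemma ip_smult_left: "ip (a \<cdot>\<^sub>v x) y = cnj a * ip x y"
  unfolding ip_def by (simp add: sum_distrib_left mult_ac)

lemma ip_smult_right: "dim_vec y = dim_vec x \<Longrightarrow> ip x (a \<cdot>\<^sub>v y) = a * ip x y"
  unfolding ip_def by (simp add: sum_distrib_left mult_ac)

lemma mat_from_basis:
  assumes o: "onb m ket" and A: "A \<in> carrier_mat (2^m) (2^m)" and ij: "i < 2^m" "j < 2^m"
  shows "A $$ (i,j) = (\<Sum>g\<in>grp m. (A *\<^sub>v ket g) $ i * cnj (ket g $ j))"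
proof -
  have car: "g \<in> grp m \<Longrightarrow> ket g \<in> carrier_vec (2^m)" for g using o unfolding onb_def by auto
  have dimk: "g \<in> grp m \<Longrightarrow> dim_vec (ket g) = 2^m" for g using car by auto
  have "(\<Sum>g\<in>grp m. (A *\<^sub>v ket g) $ i * cnj (ket g $ j))
      = (\<Sum>g\<in>grp m. \<Sum>k<2^m. A $$ (i,k) * (ket g $ k * cnj (ket g $ j)))"
    using A ij
    by (intro sum.cong refl) (simp add: dimk scalar_prod_def row_def sum_distrib_right sum_distrib_left mult_ac atLeast0LessThan)
  also have "\<dots> = (\<Sum>k<2^m. \<Sum>g\<in>grp m. A $$ (i,k) * (ket g $ k * cnj (ket g $ j)))" by (rule sum.swap)
  also have "\<dots> = (\<Sum>k<2^m. A $$ (i,k) * (if k = j then 1 else 0))"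
    by (intro sum.cong refl) (simp add: sum_distrib_left[symmetric] onb_compl[OF o _ ij(2)])
  also have "\<dots> = A $$ (i,j)" using ij by (simp add: if_distrib sum.delta' cong: if_cong)
  finally show ?thesis by simp
qed

lemma mat_eq_basis:
  assumes o: "onb m ket" and A: "A \<in> carrier_mat (2^m) (2^m)" and B: "B \<in> carrier_mat (2^m) (2^m)"
    and eq: "\<And>h. h \<in> grp m \<Longrightarrow> A *\<^sub>v ket h = B *\<^sub>v ket h"
  shows "A = B"
proof (rule eq_matI)
  fix i j assume "i < dim_row B" "j < dim_col B"
  then have ij: "i < 2^m" "j < 2^m" using B by auto
  show "A $$ (i,j) = B $$ (i,j)"
    unfolding mat_from_basis[OF o A ij] mat_from_basis[OF o B ij] using eq by simp
qed (use A B in auto)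

lemma diag_op_carrier: "diag_op m ket f \<in> carrier_mat (2^m) (2^m)"
  unfolding diag_op_def by simp

lemma diag_op_ket:
  assumes o: "onb m ket" and h: "h \<in> grp m"
  shows "diag_op m ket f *\<^sub>v ket h = f h \<cdot>\<^sub>v ket h"
proof -
  have car: "g \<in> grp m \<Longrightarrow> ket g \<in> carrier_vec (2^m)" for g using o unfolding onb_def by auto
  have dimk: "g \<in> grp m \<Longrightarrow> dim_vec (ket g) = 2^m" for g using car by auto
  have orth: "g \<in> grp m \<Longrightarrow> (\<Sum>j<2^m. cnj (ket g $ j) * ket h $ j) = (if g = h then 1 else 0)" for g
  proof -
    assume g: "g \<in> grp m"
    have "ip (ket g) (ket h) = (if g = h then 1 else 0)" using o h g unfolding onb_def by blast
    then show ?thesis by (simp add: ip_def dimk g)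
  qed
  show ?thesis
  proof (rule eq_vecI)
    fix i assume "i < dim_vec (f h \<cdot>\<^sub>v ket h)"
    then have i: "i < 2^m" using car[OF h] by simp
    have "(diag_op m ket f *\<^sub>v ket h) $ i = (\<Sum>j<2^m. \<Sum>g\<in>grp m. f g * ket g $ i * (cnj (ket g $ j) * ket h $ j))"
      using i car[OF h] unfolding diag_op_def
      by (simp add: scalar_prod_def row_def sum_distrib_right sum_distrib_left mult_ac atLeast0LessThan)
    also have "\<dots> = (\<Sum>g\<in>grp m. \<Sum>j<2^m. f g * ket g $ i * (cnj (ket g $ j) * ket h $ j))" by (rule sum.swap)
    also have "\<dots> = (\<Sum>g\<in>grp m. if g = h then f g * ket g $ i else 0)"
      by (intro sum.cong refl) (simp add: sum_distrib_left[symmetric] orth)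
    also have "\<dots> = f h * ket h $ i" using h grp_finite by simp
    finally show "(diag_op m ket f *\<^sub>v ket h) $ i = (f h \<cdot>\<^sub>v ket h) $ i" using i car[OF h] by simp
  qed (use car[OF h] in \<open>simp add: diag_op_def\<close>)
qed

lemma onb_orth_basis:
  assumes o: "onb m ket" shows "orth_basis m ket"
  unfolding orth_basis_def
proof (intro conjI ballI)
  fix v :: "complex vec" assume v: "v \<in> carrier_vec (2^m)"
  have car: "g \<in> grp m \<Longrightarrow> ket g \<in> carrier_vec (2^m)" for g using o unfolding onb_def by auto
  have dimk: "g \<in> grp m \<Longrightarrow> dim_vec (ket g) = 2^m" for g using car by auto
  show "\<exists>a. v = vec (2^m) (\<lambda>i. \<Sum>g\<in>grp m. a g * ket g $ i)"
  proof (intro exI eq_vecI)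
    fix i assume "i < dim_vec (vec (2^m) (\<lambda>i. \<Sum>g\<in>grp m. ip (ket g) v * ket g $ i))"
    then have i: "i < 2^m" by simp
    have "(\<Sum>g\<in>grp m. ip (ket g) v * ket g $ i) = (\<Sum>g\<in>grp m. \<Sum>j<2^m. ket g $ i * cnj (ket g $ j) * v $ j)"
      unfolding ip_def by (intro sum.cong refl) (simp add: dimk sum_distrib_right sum_distrib_left mult_ac)
    also have "\<dots> = (\<Sum>j<2^m. \<Sum>g\<in>grp m. ket g $ i * cnj (ket g $ j) * v $ j)" by (rule sum.swap)
    also have "\<dots> = (\<Sum>j<2^m. (if i = j then v $ j else 0))"
      by (intro sum.cong refl) (simp add: sum_distrib_right[symmetric] onb_compl[OF o i])
    also have "\<dots> = v $ i" using i by simp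
    finally show "v $ i = vec (2^m) (\<lambda>i. \<Sum>g\<in>grp m. ip (ket g) v * ket g $ i) $ i" using i by simp
  qed (use v in simp)
qed (use o in \<open>auto simp: onb_def\<close>)

lemma orth_basis_onb: "orth_basis m ket \<Longrightarrow> onb m ket"
  unfolding orth_basis_def onb_def by blast



lemma smult_mat_vec: "A \<in> carrier_mat n k \<Longrightarrow> v \<in> carrier_vec k \<Longrightarrow>
  (a \<cdot>\<^sub>m A) *\<^sub>v v = a \<cdot>\<^sub>v (A *\<^sub>v (v :: complex vec))"
  by (rule eq_vecI) (auto simp: scalar_prod_def sum_distrib_left mult_ac)

lemma proj_rep_carrier: "proj_rep m U c \<Longrightarrow> g \<in> grp m \<Longrightarrow> U g \<in> carrier_mat (2^m) (2^m)"
  unfolding proj_rep_def unitary_op_def by blast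

lemma proj_rep_mult: "proj_rep m U c \<Longrightarrow> g \<in> grp m \<Longrightarrow> h \<in> grp m \<Longrightarrow> U g * U h = c g h \<cdot>\<^sub>m U (gmult g h)"
  unfolding proj_rep_def by blast

lemma diag_op_adj:
  assumes o: "onb m ket" and \<chi>: "\<chi> \<in> chars m"
  shows "adj (diag_op m ket \<chi>) = diag_op m ket \<chi>"
proof (rule eq_matI)
  fix i j assume "i < dim_row (diag_op m ket \<chi>)" "j < dim_col (diag_op m ket \<chi>)"
  then have ij: "i < 2^m" "j < 2^m" unfolding diag_op_def by auto
  have "cnj (\<Sum>g\<in>grp m. \<chi> g * ket g $ j * cnj (ket g $ i)) = (\<Sum>g\<in>grp m. \<chi> g * ket g $ i * cnj (ket g $ j))"
    unfolding cnj_sum by (intro sum.cong refl) (simp add: chars_cnj[OF \<chi>])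
  then show "adj (diag_op m ket \<chi>) $$ (i, j) = diag_op m ket \<chi> $$ (i, j)"
    using ij unfolding adj_def diag_op_def by simp
qed (auto simp: adj_def diag_op_def)

lemma diag_op_mult:
  assumes o: "onb m ket"
  shows "diag_op m ket f * diag_op m ket f' = diag_op m ket (\<lambda>g. f g * f' g)"
proof (rule mat_eq_basis[OF o])
  fix h assume h: "h \<in> grp m"
  have car: "ket h \<in> carrier_vec (2^m)" using o h unfolding onb_def by auto
  have "diag_op m ket f * diag_op m ket f' *\<^sub>v ket h = diag_op m ket f *\<^sub>v (diag_op m ket f' *\<^sub>v ket h)"
    by (rule assoc_mult_mat_vec[OF diag_op_carrier diag_op_carrier car])
  also have "\<dots> = (f h * f' h) \<cdot>\<^sub>v ket h"
    using car by (simp add: diag_op_ket[OF o h] mult_mat_vec[OF diag_op_carrier] smult_smult_assoc mult.commute)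
  finally show "diag_op m ket f * diag_op m ket f' *\<^sub>v ket h = diag_op m ket (\<lambda>g. f g * f' g) *\<^sub>v ket h"
    by (simp add: diag_op_ket[OF o h])
qed (auto simp: diag_op_carrier intro!: mult_carrier_mat[of _ "2^m" "2^m"])

lemma diag_op_one:
  assumes o: "onb m ket" and f1: "\<And>g. g \<in> grp m \<Longrightarrow> f g = 1"
  shows "diag_op m ket f = 1\<^sub>m (2^m)"
proof (rule mat_eq_basis[OF o])
  fix h assume h: "h \<in> grp m"
  have car: "ket h \<in> carrier_vec (2^m)" using o h unfolding onb_def by auto
  show "diag_op m ket f *\<^sub>v ket h = 1\<^sub>m (2^m) *\<^sub>v ket h"
    using car by (simp add: diag_op_ket[OF o h] f1[OF h])
qed (auto simp: diag_op_carrier)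

lemma part1:
  assumes rep: "proj_rep m U c" and cov: "covariant_basis m U c ket"
  shows "dual_group_rep m (diag_op m ket) \<and> is_dual m U (diag_op m ket)"
proof -
  have o: "onb m ket" using cov orth_basis_onb unfolding covariant_basis_def by blast
  have car: "\<And>h. h \<in> grp m \<Longrightarrow> ket h \<in> carrier_vec (2^m)" using o unfolding onb_def by auto
  have covU: "\<And>g h. g \<in> grp m \<Longrightarrow> h \<in> grp m \<Longrightarrow> U g *\<^sub>v ket h = c g h \<cdot>\<^sub>v ket (gmult g h)"
    using cov unfolding covariant_basis_def by blast
  have sq: "diag_op m ket \<chi> * diag_op m ket \<chi> = 1\<^sub>m (2^m)" if \<chi>: "\<chi> \<in> chars m" for \<chi>
    unfolding diag_op_mult[OF o] by (rule diag_op_one[OF o]) (rule chars_sq[OF \<chi>])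
  have "dual_group_rep m (diag_op m ket)"
    unfolding dual_group_rep_def
  proof (intro conjI ballI)
    fix \<chi> assume \<chi>: "\<chi> \<in> chars m"
    show "unitary_op (2 ^ m) (diag_op m ket \<chi>)"
      unfolding unitary_op_def diag_op_adj[OF o \<chi>] using sq[OF \<chi>] diag_op_carrier by blast
  next
    fix \<chi> \<eta> show "diag_op m ket (cmult \<chi> \<eta>) = diag_op m ket \<chi> * diag_op m ket \<eta>"
      unfolding diag_op_mult[OF o] cmult_def ..
  next
    show "diag_op m ket (cunit m) = 1\<^sub>m (2 ^ m)" by (rule diag_op_one[OF o]) (simp add: cunit_def)
  qed
  moreover have "is_dual m U (diag_op m ket)"
    unfolding is_dual_def
  proof (intro ballI)
    fix g \<chi> assume g: "g \<in> grp m" and \<chi>: "\<chi> \<in> chars m"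
    have Ug: "U g \<in> carrier_mat (2^m) (2^m)" using proj_rep_carrier[OF rep g] .
    show "U g * diag_op m ket \<chi> = \<chi> g \<cdot>\<^sub>m (diag_op m ket \<chi> * U g)"
    proof (rule mat_eq_basis[OF o])
      fix h assume h: "h \<in> grp m"
      have gh: "gmult g h \<in> grp m" using g h by (rule gmult_grp)
      have "(U g * diag_op m ket \<chi>) *\<^sub>v ket h = U g *\<^sub>v (\<chi> h \<cdot>\<^sub>v ket h)"
        using Ug car[OF h] diag_op_carrier[of m ket \<chi>] by (simp add: diag_op_ket[OF o h])
      also have "\<dots> = (\<chi> h * c g h) \<cdot>\<^sub>v ket (gmult g h)"
        using Ug car[OF h] by (simp add: mult_mat_vec[OF Ug] covU[OF g h] smult_smult_assoc)
      also have "\<dots> = (\<chi> g * (c g h * \<chi> (gmult g h))) \<cdot>\<^sub>v ket (gmult g h)"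
        using chars_mult[OF \<chi> g h] chars_sq[OF \<chi> g]
        by (metis (no_types, lifting) mult.assoc mult.commute mult.left_commute mult_1)
      also have "\<dots> = \<chi> g \<cdot>\<^sub>v (c g h \<cdot>\<^sub>v (diag_op m ket \<chi> *\<^sub>v ket (gmult g h)))"
        by (simp add: diag_op_ket[OF o gh] smult_smult_assoc)
      also have "\<dots> = \<chi> g \<cdot>\<^sub>v (diag_op m ket \<chi> *\<^sub>v (U g *\<^sub>v ket h))"
        by (simp add: covU[OF g h] mult_mat_vec[OF diag_op_carrier car[OF gh]])
      also have "\<dots> = \<chi> g \<cdot>\<^sub>v ((diag_op m ket \<chi> * U g) *\<^sub>v ket h)"
        by (simp add: assoc_mult_mat_vec[OF diag_op_carrier Ug car[OF h]])
      also have "\<dots> = (\<chi> g \<cdot>\<^sub>m (diag_op m ket \<chi> * U g)) *\<^sub>v ket h"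
        by (rule smult_mat_vec[symmetric, OF mult_carrier_mat[OF diag_op_carrier Ug] car[OF h]])
      finally show "(U g * diag_op m ket \<chi>) *\<^sub>v ket h = (\<chi> g \<cdot>\<^sub>m (diag_op m ket \<chi> * U g)) *\<^sub>v ket h" .
    qed (use Ug in \<open>auto simp: diag_op_carrier intro!: smult_carrier_mat mult_carrier_mat[of _ "2^m" "2^m"]\<close>)
  qed
  ultimately show ?thesis ..
qed



lemma tr_comm:
  assumes A: "A \<in> carrier_mat n k" and B: "B \<in> carrier_mat k n"
  shows "tr (A * B) = tr (B * (A :: complex mat))"
proof -
  have "tr (A * B) = (\<Sum>i<n. \<Sum>j<k. A $$ (i,j) * B $$ (j,i))"
    using A B unfolding tr_def by (simp add: scalar_prod_def atLeast0LessThan)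
  also have "\<dots> = (\<Sum>j<k. \<Sum>i<n. B $$ (j,i) * A $$ (i,j))" by (subst sum.swap) (simp add: mult.commute)
  also have "\<dots> = tr (B * A)"
    using A B unfolding tr_def by (simp add: scalar_prod_def atLeast0LessThan)
  finally show ?thesis .
qed

lemma tr_smult: "A \<in> carrier_mat n n \<Longrightarrow> tr (a \<cdot>\<^sub>m A) = a * tr (A :: complex mat)"
  unfolding tr_def by (simp add: sum_distrib_left)

lemma tr_one: "tr (1\<^sub>m n :: complex mat) = of_nat n"
  unfolding tr_def by simp

lemma adj_carrier: "A \<in> carrier_mat n n \<Longrightarrow> adj A \<in> carrier_mat n n"
  unfolding adj_def by auto

lemma tr_zero:
  assumes rep: "proj_rep m U c" and V: "dual_group_rep m V" and d: "is_dual m U V"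
    and \<psi>: "\<psi> \<in> chars m" and ne: "\<psi> \<noteq> cunit m"
  shows "tr (V \<psi>) = 0"
proof -
  obtain x where x: "\<psi> x \<noteq> cunit m x" using ne by blast
  have xg: "x \<in> grp m" using x chars_out[OF \<psi>] unfolding cunit_def by (cases "x \<in> grp m") auto
  then have px: "\<psi> x = -1" using x chars_vals[OF \<psi> xg] unfolding cunit_def by auto
  define W where "W = U x"
  have Wu: "unitary_op (2^m) W" using rep xg unfolding proj_rep_def W_def by blast
  then have W: "W \<in> carrier_mat (2^m) (2^m)" and W1: "adj W * W = 1\<^sub>m (2^m)" and W2: "W * adj W = 1\<^sub>m (2^m)"
    unfolding unitary_op_def by auto
  have aW: "adj W \<in> carrier_mat (2^m) (2^m)" using adj_carrier[OF W] .
  have Vp: "V \<psi> \<in> carrier_mat (2^m) (2^m)" using V \<psi> unfolding dual_group_rep_def unitary_op_def by blast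
  have WV: "W * V \<psi> = (-1) \<cdot>\<^sub>m (V \<psi> * W)" using d xg \<psi> px unfolding is_dual_def W_def by metis
  have "tr ((W * V \<psi>) * adj W) = tr (adj W * (W * V \<psi>))"
    by (rule tr_comm[OF mult_carrier_mat[OF W Vp] aW])
  also have "adj W * (W * V \<psi>) = (adj W * W) * V \<psi>" using assoc_mult_mat[OF aW W Vp] by simp
  also have "\<dots> = V \<psi>" using W1 Vp by simp
  finally have e1: "tr ((W * V \<psi>) * adj W) = tr (V \<psi>)" .
  have "(W * V \<psi>) * adj W = (-1) \<cdot>\<^sub>m ((V \<psi> * W) * adj W)"
    unfolding WV by (rule mult_smult_assoc_mat[OF mult_carrier_mat[OF Vp W] aW])
  also have "(V \<psi> * W) * adj W = V \<psi> * (W * adj W)" by (rule assoc_mult_mat[OF Vp W aW])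
  also have "\<dots> = V \<psi>" using W2 Vp by simp
  finally have "tr ((W * V \<psi>) * adj W) = - tr (V \<psi>)" by (simp add: tr_smult[OF Vp])
  with e1 show ?thesis by simp
qed

lemma part3:
  assumes rep: "proj_rep m U c" and V: "dual_group_rep m V" and d: "is_dual m U V"
  shows "(\<forall>\<chi>\<in>chars m. V \<chi> * V \<chi> = 1\<^sub>m (2^m))
          \<and> (\<forall>\<chi>\<in>chars m. \<forall>\<eta>\<in>chars m.
               tr (V \<chi> * V \<eta>) = (if \<chi> = \<eta> then 2^m else 0))"
proof (intro conjI ballI)
  fix \<chi> assume \<chi>: "\<chi> \<in> chars m"
  have "V \<chi> * V \<chi> = V (cmult \<chi> \<chi>)" using V \<chi> unfolding dual_group_rep_def by metis
  then show "V \<chi> * V \<chi> = 1\<^sub>m (2^m)" using V cmult_self[OF \<chi>] unfolding dual_group_rep_def by simp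
next
  fix \<chi> \<eta> assume \<chi>: "\<chi> \<in> chars m" and \<eta>: "\<eta> \<in> chars m"
  have e: "V \<chi> * V \<eta> = V (cmult \<chi> \<eta>)" using V \<chi> \<eta> unfolding dual_group_rep_def by metis
  show "tr (V \<chi> * V \<eta>) = (if \<chi> = \<eta> then 2^m else 0)"
  proof (cases "\<chi> = \<eta>")
    case True
    then show ?thesis using e V cmult_self[OF \<chi>] unfolding dual_group_rep_def by (simp add: tr_one)
  next
    case False
    then have "cmult \<chi> \<eta> \<noteq> cunit m" using cmult_eq_cunit[OF \<chi> \<eta>] by simp
    then show ?thesis using e False tr_zero[OF rep V d cmult_chars[OF \<chi> \<eta>]] by simp
  qed
qed



lemma fixed_vec:
  assumes rep: "proj_rep m U c" and V: "dual_group_rep m V" and d: "is_dual m U V"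
  shows "\<exists>u. u \<in> carrier_vec (2^m) \<and> ip u u = 1 \<and> (\<forall>\<chi>\<in>chars m. V \<chi> *\<^sub>v u = u)"
proof -
  define n :: nat where "n = 2^m"
  have Vc: "\<And>\<chi>. \<chi> \<in> chars m \<Longrightarrow> V \<chi> \<in> carrier_mat n n"
    using V unfolding dual_group_rep_def unitary_op_def n_def by blast
  have Vm: "\<And>\<chi> \<eta>. \<chi> \<in> chars m \<Longrightarrow> \<eta> \<in> chars m \<Longrightarrow> V \<chi> * V \<eta> = V (cmult \<chi> \<eta>)"
    using V unfolding dual_group_rep_def by metis
  have V1: "V (cunit m) = 1\<^sub>m n" using V unfolding dual_group_rep_def n_def by blast
  define s where "s = (\<lambda>i j. \<Sum>\<psi>\<in>chars m. V \<psi> $$ (i,j))"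
  have "(\<Sum>i<n. s i i) = (\<Sum>\<psi>\<in>chars m. tr (V \<psi>))"
    unfolding s_def tr_def using Vc by (subst sum.swap) (intro sum.cong refl, auto)
  also have "\<dots> = tr (V (cunit m)) + (\<Sum>\<psi>\<in>chars m - {cunit m}. tr (V \<psi>))"
    by (rule sum.remove[OF chars_finite cunit_chars])
  also have "(\<Sum>\<psi>\<in>chars m - {cunit m}. tr (V \<psi>)) = 0"
    by (intro sum.neutral ballI) (auto intro: tr_zero[OF rep V d])
  finally have "(\<Sum>i<n. s i i) = of_nat n" using V1 by (simp add: tr_one)
  moreover have "n \<noteq> 0" unfolding n_def by simp
  ultimately obtain j where j: "j < n" "s j j \<noteq> 0"
    by (metis (no_types, lifting) of_nat_eq_0_iff sum.neutral lessThan_iff)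
  define v where "v = vec n (\<lambda>i. s i j)"
  have vc: "v \<in> carrier_vec n" unfolding v_def by simp
  have fix_v: "V \<chi> *\<^sub>v v = v" if \<chi>: "\<chi> \<in> chars m" for \<chi>
  proof (rule eq_vecI)
    fix i assume "i < dim_vec v"
    then have i: "i < n" unfolding v_def by simp
    have "(V \<chi> *\<^sub>v v) $ i = (\<Sum>k<n. V \<chi> $$ (i,k) * (\<Sum>\<psi>\<in>chars m. V \<psi> $$ (k,j)))"
      using i Vc[OF \<chi>] unfolding v_def s_def by (simp add: scalar_prod_def atLeast0LessThan mult.commute)
    also have "\<dots> = (\<Sum>\<psi>\<in>chars m. \<Sum>k<n. V \<chi> $$ (i,k) * V \<psi> $$ (k,j))"
      by (simp add: sum_distrib_left) (rule sum.swap)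
    also have "\<dots> = (\<Sum>\<psi>\<in>chars m. V (cmult \<chi> \<psi>) $$ (i,j))"
    proof (intro sum.cong refl)
      fix \<psi> assume \<psi>: "\<psi> \<in> chars m"
      have "(V \<chi> * V \<psi>) $$ (i,j) = (\<Sum>k<n. V \<chi> $$ (i,k) * V \<psi> $$ (k,j))"
        using i j Vc[OF \<chi>] Vc[OF \<psi>] by (simp add: scalar_prod_def atLeast0LessThan)
      then show "(\<Sum>k<n. V \<chi> $$ (i,k) * V \<psi> $$ (k,j)) = V (cmult \<chi> \<psi>) $$ (i,j)"
        using Vm[OF \<chi> \<psi>] by simp
    qed
    also have "\<dots> = (\<Sum>\<psi>\<in>chars m. V \<psi> $$ (i,j))"
      using sum.reindex_bij_betw[OF cmult_bij[OF \<chi>], of "\<lambda>\<psi>. V \<psi> $$ (i,j)"] .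
    finally show "(V \<chi> *\<^sub>v v) $ i = v $ i" using i unfolding v_def s_def by simp
  qed (use Vc[OF \<chi>] vc in auto)
  define R where "R = (\<Sum>i<n. (cmod (v $ i))\<^sup>2)"
  have "ip v v = (\<Sum>i<n. v $ i * cnj (v $ i))" unfolding ip_def using vc by (simp add: mult.commute)
  also have "\<dots> = (\<Sum>i<n. complex_of_real ((cmod (v $ i))\<^sup>2))" by (simp only: complex_norm_square)
  also have "\<dots> = of_real R" unfolding R_def by (simp only: of_real_sum)
  finally have ipv: "ip v v = of_real R" .
  have "(cmod (v $ j))\<^sup>2 > 0" using j unfolding v_def by simp
  moreover have "(cmod (v $ j))\<^sup>2 \<le> R" unfolding R_def
    using j by (intro member_le_sum) auto
  ultimately have Rpos: "R > 0" by linarith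
  define a where "a = complex_of_real (1 / sqrt R)"
  define u where "u = a \<cdot>\<^sub>v v"
  have uc: "u \<in> carrier_vec n" unfolding u_def using vc by simp
  have "ip u u = cnj a * (a * ip v v)" unfolding u_def
    using ip_smult_left ip_smult_right by (simp add: ip_smult_left ip_smult_right)
  also have "\<dots> = 1" unfolding ipv
  proof -
    have "cnj a * (a * of_real R) = of_real ((1 / sqrt R) * (1 / sqrt R) * R)"
      unfolding a_def by (simp only: complex_cnj_complex_of_real of_real_mult mult.assoc)
    also have "(1 / sqrt R) * (1 / sqrt R) * R = 1" using Rpos
      by (simp add: real_sqrt_mult[symmetric] del: real_sqrt_mult)
    finally show "cnj a * (a * of_real R) = 1" by simp
  qed
  finally have "ip u u = 1" .
  moreover have "\<forall>\<chi>\<in>chars m. V \<chi> *\<^sub>v u = u"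
    unfolding u_def by (simp add: mult_mat_vec[OF Vc vc] fix_v)
  ultimately show ?thesis using uc unfolding n_def by blast
qed



lemma part2:
  assumes rep: "proj_rep m U c" and V: "dual_group_rep m V" and d: "is_dual m U V"
  shows "\<exists>ket. covariant_basis m U c ket \<and> (\<forall>\<chi>\<in>chars m. V \<chi> = diag_op m ket \<chi>)"
proof -
  obtain u where uc: "u \<in> carrier_vec (2^m)" and uu: "ip u u = 1" and uf: "\<And>\<chi>. \<chi> \<in> chars m \<Longrightarrow> V \<chi> *\<^sub>v u = u"
    using fixed_vec[OF rep V d] by blast
  have Vc: "\<And>\<chi>. \<chi> \<in> chars m \<Longrightarrow> V \<chi> \<in> carrier_mat (2^m) (2^m)"
    using V unfolding dual_group_rep_def unitary_op_def by blast
  have Vu: "\<And>\<chi>. \<chi> \<in> chars m \<Longrightarrow> unitary_op (2^m) (V \<chi>)"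
    using V unfolding dual_group_rep_def by blast
  have Uu: "\<And>g. g \<in> grp m \<Longrightarrow> unitary_op (2^m) (U g)"
    using rep unfolding proj_rep_def by blast
  have Uc: "\<And>g. g \<in> grp m \<Longrightarrow> U g \<in> carrier_mat (2^m) (2^m)" using proj_rep_carrier[OF rep] .
  define ket where "ket = (\<lambda>g. U g *\<^sub>v u)"
  have kc: "\<And>g. g \<in> grp m \<Longrightarrow> ket g \<in> carrier_vec (2^m)" unfolding ket_def by (rule mult_mat_vec_carrier[OF Uc uc])
  have kv: "V \<chi> *\<^sub>v ket g = \<chi> g \<cdot>\<^sub>v ket g" if \<chi>: "\<chi> \<in> chars m" and g: "g \<in> grp m" for \<chi> g
  proof -
    have du: "U g * V \<chi> = \<chi> g \<cdot>\<^sub>m (V \<chi> * U g)" using d \<chi> g unfolding is_dual_def by blast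
    have "ket g = U g *\<^sub>v (V \<chi> *\<^sub>v u)" unfolding ket_def using uf[OF \<chi>] by simp
    also have "\<dots> = (U g * V \<chi>) *\<^sub>v u" using Uc[OF g] Vc[OF \<chi>] uc by simp
    also have "\<dots> = \<chi> g \<cdot>\<^sub>v ((V \<chi> * U g) *\<^sub>v u)"
      unfolding du by (rule smult_mat_vec[OF mult_carrier_mat[OF Vc[OF \<chi>] Uc[OF g]] uc])
    also have "\<dots> = \<chi> g \<cdot>\<^sub>v (V \<chi> *\<^sub>v ket g)" unfolding ket_def using Uc[OF g] Vc[OF \<chi>] uc by simp
    finally have E: "ket g = \<chi> g \<cdot>\<^sub>v (V \<chi> *\<^sub>v ket g)" .
    have "\<chi> g \<cdot>\<^sub>v ket g = (\<chi> g * \<chi> g) \<cdot>\<^sub>v (V \<chi> *\<^sub>v ket g)"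
      using arg_cong[OF E, of "\<lambda>x. \<chi> g \<cdot>\<^sub>v x"] by (simp add: smult_smult_assoc)
    then show ?thesis using chars_sq[OF \<chi> g] by simp
  qed
  have orth: "ip (ket g) (ket h) = (if g = h then 1 else 0)" if g: "g \<in> grp m" and h: "h \<in> grp m" for g h
  proof (cases "g = h")
    case True
    then show ?thesis unfolding ket_def using ip_unitary[OF Uu[OF g] uc uc] uu by simp
  next
    case False
    obtain \<chi> where \<chi>: "\<chi> \<in> chars m" and pm: "\<chi> g * \<chi> h = -1" using sep_char[OF g h False] by blast
    have "ip (ket g) (ket h) = ip (V \<chi> *\<^sub>v ket g) (V \<chi> *\<^sub>v ket h)"
      using ip_unitary[OF Vu[OF \<chi>] kc[OF g] kc[OF h]] by simp
    also have "\<dots> = cnj (\<chi> g) * (\<chi> h * ip (ket g) (ket h))"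
      unfolding kv[OF \<chi> g] kv[OF \<chi> h] using kc[OF g] kc[OF h]
      by (simp add: ip_smult_left ip_smult_right)
    also have "\<dots> = - ip (ket g) (ket h)" using pm chars_cnj[OF \<chi> g] by (simp add: mult.assoc[symmetric])
    finally show ?thesis using False by simp
  qed
  have o: "onb m ket" unfolding onb_def using kc orth by blast
  have cov: "U g *\<^sub>v ket h = c g h \<cdot>\<^sub>v ket (gmult g h)" if g: "g \<in> grp m" and h: "h \<in> grp m" for g h
  proof -
    have "U g *\<^sub>v ket h = (U g * U h) *\<^sub>v u" unfolding ket_def using Uc[OF g] Uc[OF h] uc by simp
    also have "\<dots> = (c g h \<cdot>\<^sub>m U (gmult g h)) *\<^sub>v u" using proj_rep_mult[OF rep g h] by simp
    also have "\<dots> = c g h \<cdot>\<^sub>v ket (gmult g h)"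
      unfolding ket_def by (rule smult_mat_vec[OF Uc[OF gmult_grp[OF g h]] uc])
    finally show ?thesis .
  qed
  have "covariant_basis m U c ket"
    unfolding covariant_basis_def using onb_orth_basis[OF o] cov by blast
  moreover have "\<forall>\<chi>\<in>chars m. V \<chi> = diag_op m ket \<chi>"
  proof
    fix \<chi> assume \<chi>: "\<chi> \<in> chars m"
    show "V \<chi> = diag_op m ket \<chi>"
      by (rule mat_eq_basis[OF o Vc[OF \<chi>] diag_op_carrier]) (simp add: kv[OF \<chi>] diag_op_ket[OF o])
  qed
  ultimately show ?thesis by blast
qed

theorem mainTheorem6:
  fixes m :: nat
    and U :: "bool list \<Rightarrow> complex mat"
    and c :: "bool list \<Rightarrow> bool list \<Rightarrow> complex"
  assumes rep: "proj_rep m U c"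
    and faithful: "inj_on U (grp m)"
    and no_minus_id: "\<forall>g\<in>grp m. U g \<noteq> - (1\<^sub>m (2^m))"
    and ideal: "\<exists>ket. covariant_basis m U c ket"
  shows "(\<forall>ket. covariant_basis m U c ket \<longrightarrow>
            dual_group_rep m (diag_op m ket) \<and> is_dual m U (diag_op m ket))
       \<and> (\<forall>V. dual_group_rep m V \<and> is_dual m U V \<longrightarrow>
            (\<exists>ket. covariant_basis m U c ket \<and> (\<forall>\<chi>\<in>chars m. V \<chi> = diag_op m ket \<chi>)))
       \<and> (\<forall>V. dual_group_rep m V \<and> is_dual m U V \<longrightarrow>
            (\<forall>\<chi>\<in>chars m. V \<chi> * V \<chi> = 1\<^sub>m (2^m))
          \<and> (\<forall>\<chi>\<in>chars m. \<forall>\<eta>\<in>chars m.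
               tr (V \<chi> * V \<eta>) = (if \<chi> = \<eta> then 2^m else 0)))"
  using part1[OF rep] part2[OF rep] part3[OF rep] by blast

end
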